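(* Let $F:\mathbb{R}^d\to\mathbb{R}^d$ be $L$-Lipschitz, $G:\mathbb{R}^d\rightrightarrows\mathbb{R}^d$ maximally monotone, the solution set of $0\in F(x)+G(x)$ nonempty, and suppose there is a nonempty subset of solutions each element $x^\star$ of which satisfies $\langle u,x-x^\star\rangle\ge-\rho\|u\|^2$ for all $(x,u)$ in the graph of $F+G$, with $\rho>0$. Let $\eta<\frac1L$, $\rho<\eta$, $x^\star$ such a solution, and $(x_k)$ generated by the inexact KM iteration in the context. Then for any $\varepsilon>0$, for some $K\le\left\lceil\frac{11\|x_0-x^\star\|^2}{(\eta-\rho)^2\varepsilon^2}\right\rceil$ there is $x^{\mathrm{out}}\in\{x_0,\dots,x_{K-1}\}$ with $\eta^{-1}\|(\mathrm{Id}-J_{\eta(F+G)})(x^{\mathrm{out}})\|\le\varepsilon$, with total first-order oracle complexity $$\widetilde O\left(\frac{(1+\eta L)\|x_0-x^\star\|^2}{\varepsilon^2(\eta-\rho)^2(1-\eta L)}\right).$$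
   Context: For an operator $A$, $J_A=(\mathrm{Id}+A)^{-1}$. A first-order oracle call is one evaluation of $F$ and one resolvent of (a positive multiple of) $G$; $\widetilde O$ hides logarithmic factors. Subroutine FBF$(z_0,N,A,B_{\mathrm{in}},L_B)$: $\tau=\frac{1}{2L_B}$, $B(\cdot)=B_{\mathrm{in}}(\cdot)-z_0$; for $t=0,\dots,N-1$: $z_{t+1/2}=J_{\tau A}(z_t-\tau B(z_t))$, $z_{t+1}=z_{t+1/2}+\tau B(z_t)-\tau B(z_{t+1/2})$; output $z_N$. Inexact KM iteration: given $x_0$, $\alpha=1-\frac\rho\eta$; for $k\ge0$: $\widetilde J_{\eta(F+G)}(x_k)=\mathrm{FBF}(x_k,N_k,\eta G,\mathrm{Id}+\eta F,1+\eta L)$ with $N_k=\left\lceil\frac{4(1+\eta L)}{1-\eta L}\log(8(k+1)\log^2(k+2))\right\rceil$, and $x_{k+1}=(1-\alpha)x_k+\alpha\widetilde J_{\eta(F+G)}(x_k)$. *)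

theory Defs
  imports "HOL-Analysis.Analysis"
begin

definition graph_op :: "('a \<Rightarrow> 'a set) \<Rightarrow> ('a \<times> 'a) set" where
  "graph_op A = {(x, u). u \<in> A x}"

definition monotone_op :: "('a::real_inner \<Rightarrow> 'a set) \<Rightarrow> bool" where
  "monotone_op A \<longleftrightarrow>
     (\<forall>x y u v. u \<in> A x \<longrightarrow> v \<in> A y \<longrightarrow> inner (u - v) (x - y) \<ge> 0)"

definition maximal_monotone :: "('a::real_inner \<Rightarrow> 'a set) \<Rightarrow> bool" where
  "maximal_monotone A \<longleftrightarrow> monotone_op A \<and>
     (\<forall>B. monotone_op B \<longrightarrow> graph_op A \<subseteq> graph_op B \<longrightarrow> B = A)"

definition op_plus :: "('a::real_vector \<Rightarrow> 'a) \<Rightarrow> ('a \<Rightarrow> 'a set) \<Rightarrow> 'a \<Rightarrow> 'a set" where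
  "op_plus F G x = {F x + u | u. u \<in> G x}"

definition op_scale :: "real \<Rightarrow> ('a::real_vector \<Rightarrow> 'a set) \<Rightarrow> 'a \<Rightarrow> 'a set" where
  "op_scale c A x = (\<lambda>u. c *\<^sub>R u) ` A x"

text \<open>Resolvent J_A = (Id + A)^{-1}, as a set-valued map:
  J_A(x) = {z. x \<in> z + A z}.\<close>
definition resolvent :: "('a::real_vector \<Rightarrow> 'a set) \<Rightarrow> 'a \<Rightarrow> 'a set" where
  "resolvent A x = {z. x - z \<in> A z}"

text \<open>Point value of a resolvent (meaningful when the resolvent is single-valued,
  e.g. for maximally monotone A).\<close>
definition resolvent_pt :: "('a::real_vector \<Rightarrow> 'a set) \<Rightarrow> 'a \<Rightarrow> 'a" where
  "resolvent_pt A x = (THE z. z \<in> resolvent A x)"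

definition fbf_step ::
  "real \<Rightarrow> ('a::real_vector \<Rightarrow> 'a set) \<Rightarrow> ('a \<Rightarrow> 'a) \<Rightarrow> 'a \<Rightarrow> 'a" where
  "fbf_step \<tau> A B z =
     (let zh = resolvent_pt (op_scale \<tau> A) (z - \<tau> *\<^sub>R B z)
      in zh + \<tau> *\<^sub>R B z - \<tau> *\<^sub>R B zh)"

definition FBF ::
  "'a::real_vector \<Rightarrow> nat \<Rightarrow> ('a \<Rightarrow> 'a set) \<Rightarrow> ('a \<Rightarrow> 'a) \<Rightarrow> real \<Rightarrow> 'a" where
  "FBF z0 N A Bin LB =
     (let \<tau> = 1 / (2 * LB); B = (\<lambda>y. Bin y - z0)
      in (fbf_step \<tau> A B ^^ N) z0)"

definition inner_iters :: "real \<Rightarrow> real \<Rightarrow> nat \<Rightarrow> nat" where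
  "inner_iters \<eta> L k =
     nat \<lceil>4 * (1 + \<eta> * L) / (1 - \<eta> * L)
            * ln (8 * real (k + 1) * (ln (real (k + 2)))\<^sup>2)\<rceil>"

end

theory Submission
  imports Defs
begin

lemma mono_avg:
  fixes A :: "('a::real_inner \<times> 'a) set"
  assumes fin: "finite A" and u0: "\<forall>i\<in>A. 0 \<le> u i" and u1: "sum u A = 1"
    and mon: "\<forall>i\<in>A. \<forall>j\<in>A. inner (snd i - snd j) (fst i - fst j) \<ge> 0"
  shows "inner (\<Sum>i\<in>A. u i *\<^sub>R snd i) (\<Sum>i\<in>A. u i *\<^sub>R fst i)
          \<le> (\<Sum>i\<in>A. u i * inner (snd i) (fst i))"
proof -
  define S where "S = (\<Sum>i\<in>A. u i * inner (snd i) (fst i))"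
  define W where "W = inner (\<Sum>i\<in>A. u i *\<^sub>R snd i) (\<Sum>i\<in>A. u i *\<^sub>R fst i)"
  have h2: "W = (\<Sum>i\<in>A. \<Sum>j\<in>A. u i * u j * inner (snd j) (fst i))"
    unfolding W_def by (simp add: inner_sum_left inner_sum_right sum_distrib_left mult.assoc)
  have h1: "W = (\<Sum>i\<in>A. \<Sum>j\<in>A. u i * u j * inner (snd i) (fst j))"
    unfolding h2 by (subst sum.swap) (simp add: mult.commute)
  have h3: "S = (\<Sum>i\<in>A. \<Sum>j\<in>A. u i * u j * inner (snd i) (fst i))"
    unfolding S_def by (simp add: sum_distrib_right[symmetric] mult.commute[of "u _" "u _"] mult.assoc[symmetric]
       flip: sum_distrib_left) (simp add: sum_distrib_left[symmetric] u1 mult.assoc)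
  have h4: "S = (\<Sum>i\<in>A. \<Sum>j\<in>A. u i * u j * inner (snd j) (fst j))"
    unfolding S_def by (subst sum.swap) (simp add: sum_distrib_right[symmetric] u1)
  have "0 \<le> (\<Sum>i\<in>A. \<Sum>j\<in>A. u i * u j * inner (snd i - snd j) (fst i - fst j))"
    using u0 mon by (intro sum_nonneg) (auto intro!: mult_nonneg_nonneg)
  also have "\<dots> = (\<Sum>i\<in>A. \<Sum>j\<in>A. u i * u j * inner (snd i) (fst i))
      + (\<Sum>i\<in>A. \<Sum>j\<in>A. u i * u j * inner (snd j) (fst j))
      - (\<Sum>i\<in>A. \<Sum>j\<in>A. u i * u j * inner (snd i) (fst j))
      - (\<Sum>i\<in>A. \<Sum>j\<in>A. u i * u j * inner (snd j) (fst i))"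
    by (simp add: inner_diff_left inner_diff_right algebra_simps sum_subtractf sum.distrib)
  finally show ?thesis using h1 h2 h3 h4 unfolding S_def[symmetric] W_def[symmetric] by linarith
qed

lemma quad_ball:
  fixes z p w y :: "'a::real_inner"
  shows "inner (z + w - p) (z - y) = (norm (z - (p - w + y) /\<^sub>R 2))\<^sup>2 - (norm ((p - w - y) /\<^sub>R 2))\<^sup>2"
  by (simp add: power2_norm_eq_inner inner_diff_left inner_diff_right inner_add_left inner_add_right
      inner_commute algebra_simps)

lemma Max_cont:
  fixes f :: "'i \<Rightarrow> 'a::topological_space \<Rightarrow> real"
  assumes "finite Q" "Q \<noteq> {}" "\<And>i. continuous_on UNIV (f i)"
  shows "continuous_on UNIV (\<lambda>z. Max ((\<lambda>i. f i z) ` Q))"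
  using assms(1,2)
proof (induction Q rule: finite_ne_induct)
  case (singleton x)
  then show ?case using assms(3) by simp
next
  case (insert x F)
  have "(\<lambda>z. Max ((\<lambda>i. f i z) ` insert x F)) = (\<lambda>z. max (f x z) (Max ((\<lambda>i. f i z) ` F)))"
    using insert by (simp add: Max_insert)
  then show ?case using insert assms(3) by (simp add: continuous_on_max)
qed

lemma finite_ext:
  fixes P :: "('a::euclidean_space \<times> 'a) set"
  assumes fin: "finite P" and ne: "P \<noteq> {}" and c: "c > 0"
    and mon: "\<forall>i\<in>P. \<forall>j\<in>P. inner (snd i - snd j) (fst i - fst j) \<ge> 0"
  shows "\<exists>z. \<forall>i\<in>P. inner (z + c *\<^sub>R snd i - p) (z - fst i) \<le> 0"
proof -
  define f where "f i z = inner (z + c *\<^sub>R snd i - p) (z - fst i)" for i z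
  define \<psi> where "\<psi> z = Max ((\<lambda>i. f i z) ` P)" for z
  have contf: "continuous_on UNIV (f i)" for i unfolding f_def by (intro continuous_intros)
  have cont\<psi>: "continuous_on UNIV \<psi>" unfolding \<psi>_def by (rule Max_cont[OF fin ne contf])
  have \<psi>ge: "f i z \<le> \<psi> z" if "i \<in> P" for i z using that fin by (simp add: \<psi>_def)
  obtain i0 where i0: "i0 \<in> P" using ne by auto
  define c0 where "c0 = (p - c *\<^sub>R snd i0 + fst i0) /\<^sub>R 2"
  define r0 where "r0 = norm ((p - c *\<^sub>R snd i0 - fst i0) /\<^sub>R 2)"
  have fi0: "f i0 z = (norm (z - c0))\<^sup>2 - r0\<^sup>2" for z
    unfolding f_def c0_def r0_def by (rule quad_ball)
  define R where "R = \<bar>\<psi> c0\<bar> + r0 + 1"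
  have r0ge: "r0 \<ge> 0" unfolding r0_def by simp
  have R0: "R \<ge> 0" unfolding R_def using r0ge by simp
  have out: "\<psi> z > \<psi> c0" if "norm (z - c0) > R" for z
  proof -
    have "(norm (z - c0))\<^sup>2 > R\<^sup>2" using that R0 by (simp add: power_strict_mono)
    moreover have "R\<^sup>2 \<ge> (\<bar>\<psi> c0\<bar> + 1)\<^sup>2 + r0\<^sup>2"
      unfolding R_def using r0ge by (simp add: power2_eq_square algebra_simps)
    moreover have "(\<bar>\<psi> c0\<bar> + 1)\<^sup>2 \<ge> \<bar>\<psi> c0\<bar> + 1"
      using mult_left_mono[of 1 "\<bar>\<psi> c0\<bar> + 1" "\<bar>\<psi> c0\<bar> + 1"] by (simp add: power2_eq_square)
    ultimately show ?thesis using \<psi>ge[OF i0, of z] fi0[of z] by linarith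
  qed
  obtain z0 where z0: "z0 \<in> cball c0 R" "\<forall>y\<in>cball c0 R. \<psi> z0 \<le> \<psi> y"
  proof -
    have "c0 \<in> cball c0 R" using R0 by simp
    then show ?thesis using that continuous_attains_inf[OF compact_cball, of c0 R \<psi>] cont\<psi>
      by (metis continuous_on_subset empty_iff subset_UNIV)
  qed
  have zmin: "\<psi> z0 \<le> \<psi> z" for z
  proof (cases "z \<in> cball c0 R")
    case True then show ?thesis using z0 by blast
  next
    case False
    then have "norm (z - c0) > R" by (simp add: dist_norm norm_minus_commute)
    moreover have "\<psi> z0 \<le> \<psi> c0" using z0(2) R0 by simp
    ultimately show ?thesis using out[of z] by linarith
  qed
  define m where "m = \<psi> z0"
  define A where "A = {i\<in>P. f i z0 = m}"
  have AP: "A \<subseteq> P" and finA: "finite A" using fin by (auto simp: A_def)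
  have fle: "f i z0 \<le> m" if "i \<in> P" for i using \<psi>ge[OF that] by (simp add: m_def)
  define lg where "lg i = 2 *\<^sub>R z0 + c *\<^sub>R snd i - p - fst i" for i :: "'a \<times> 'a"
  have expand: "f i (z0 - t *\<^sub>R a) = f i z0 - t * inner a (lg i) + t\<^sup>2 * inner a a" for i t a
    unfolding f_def lg_def
    by (simp add: inner_diff_left inner_diff_right inner_add_left inner_add_right
      inner_commute algebra_simps power2_eq_square)
  have key: "0 \<in> lg ` (convex hull A)"
  proof (rule ccontr)
    assume nz: "0 \<notin> lg ` (convex hull A)"
    define L where "L q = c *\<^sub>R snd q - fst q" for q :: "'a \<times> 'a"
    have linL: "linear L" unfolding L_def
      by (rule linearI) (auto simp: algebra_simps scaleR_add_right)
    have img: "lg ` S = (+) (2 *\<^sub>R z0 - p) ` (L ` S)" for S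
      unfolding image_image lg_def L_def by (rule image_cong) (auto simp: algebra_simps)
    have cvx: "convex (lg ` (convex hull A))"
      unfolding img by (intro convex_translation convex_linear_image linL convex_convex_hull)
    have "continuous_on UNIV lg" unfolding lg_def by (intro continuous_intros)
    then have "compact (lg ` (convex hull A))"
      by (meson compact_continuous_image continuous_on_subset finA finite_imp_compact_convex_hull subset_UNIV)
    then obtain a b where ab: "a \<noteq> 0" "0 < b" "\<forall>x\<in>lg ` (convex hull A). inner a x > b"
      using separating_hyperplane_closed_0[OF cvx _ nz] compact_imp_closed by blast
    have abA: "inner a (lg i) > b" if "i \<in> A" for i
      using ab(3) that by (simp add: hull_inc)
    have aa: "inner a a > 0" using ab(1) by simp
    have ev: "\<forall>\<^sub>F t in at_right (0::real). \<forall>i\<in>P. f i (z0 - t *\<^sub>R a) < m"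
    proof (rule eventually_ball_finite[OF fin], rule ballI)
      fix i assume iP: "i \<in> P"
      show "\<forall>\<^sub>F t in at_right 0. f i (z0 - t *\<^sub>R a) < m"
      proof (cases "i \<in> A")
        case True
        have e1: "\<forall>\<^sub>F t in at_right (0::real). t < b / inner a a"
          using order_tendstoD(2)[OF tendsto_ident_at[of "0::real" "{0<..}"], of "b / inner a a"]
            ab(2) aa by simp
        show ?thesis using eventually_conj[OF e1 eventually_at_right_less[of "0::real"]]
        proof (rule eventually_mono)
          fix t :: real assume t: "t < b / inner a a \<and> 0 < t"
          then have "t * inner a a < b" using aa by (simp add: pos_less_divide_eq)
          then have "t\<^sup>2 * inner a a < t * b" using t by (simp add: power2_eq_square)
          moreover have "t * b < t * inner a (lg i)" using t abA[OF True] by simp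
          moreover have "f i z0 = m" using True by (simp add: A_def)
          ultimately show "f i (z0 - t *\<^sub>R a) < m" unfolding expand by linarith
        qed
      next
        case False
        then have lt: "f i z0 < m" using fle[OF iP] iP by (auto simp: A_def)
        have "((\<lambda>t. f i z0 - t * inner a (lg i) + t\<^sup>2 * inner a a) \<longlongrightarrow>
               f i z0 - 0 * inner a (lg i) + 0\<^sup>2 * inner a a) (at_right 0)"
          by (intro tendsto_intros)
        then have "((\<lambda>t. f i (z0 - t *\<^sub>R a)) \<longlongrightarrow> f i z0) (at_right 0)"
          unfolding expand by simp
        from order_tendstoD(2)[OF this lt] show ?thesis .
      qed
    qed
    then obtain t where "\<forall>i\<in>P. f i (z0 - t *\<^sub>R a) < m"
      using eventually_happens[OF ev] by auto
    then have "\<psi> (z0 - t *\<^sub>R a) < m" unfolding \<psi>_def using fin ne by (simp add: Max_less_iff)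
    then show False using zmin[of "z0 - t *\<^sub>R a"] by (simp add: m_def)
  qed
  then obtain q where q: "q \<in> convex hull A" "lg q = 0" by auto
  then obtain u where u: "\<forall>x\<in>A. 0 \<le> u x" "sum u A = 1" "(\<Sum>x\<in>A. u x *\<^sub>R x) = q"
    using convex_hull_finite[OF finA] by auto
  define Y where "Y = (\<Sum>i\<in>A. u i *\<^sub>R fst i)"
  define W where "W = (\<Sum>i\<in>A. u i *\<^sub>R snd i)"
  have "fst q = Y" "snd q = W" unfolding Y_def W_def u(3)[symmetric] by (simp_all add: fst_sum snd_sum)
  then have rel: "2 *\<^sub>R z0 + c *\<^sub>R W - p - Y = 0" using q(2) by (simp add: lg_def)
  have monA: "\<forall>i\<in>A. \<forall>j\<in>A. inner (snd i - snd j) (fst i - fst j) \<ge> 0" using mon AP by blast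
  have avg: "inner W Y \<le> (\<Sum>i\<in>A. u i * inner (snd i) (fst i))"
    unfolding W_def Y_def by (rule mono_avg[OF finA u(1,2) monA])
  have "m = (\<Sum>i\<in>A. u i * m)" using u(2) by (simp add: sum_distrib_right[symmetric])
  also have "\<dots> = (\<Sum>i\<in>A. u i * f i z0)" by (rule sum.cong) (auto simp: A_def)
  also have "\<dots> = (\<Sum>i\<in>A. u i * (inner (z0 - p) z0 - inner (z0 - p) (fst i)
                 + c * inner (snd i) z0 - c * inner (snd i) (fst i)))"
    unfolding f_def by (rule sum.cong) (auto simp: inner_diff_left inner_diff_right inner_add_left algebra_simps)
  also have "\<dots> = inner (z0 - p) z0 - inner (z0 - p) Y + c * inner W z0 - c * (\<Sum>i\<in>A. u i * inner (snd i) (fst i))"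
    unfolding Y_def W_def
    by (simp add: algebra_simps sum.distrib sum_subtractf inner_sum_left inner_sum_right
        sum_distrib_left[symmetric] sum_distrib_right[symmetric] u(2))
  also have "\<dots> \<le> inner (z0 - p) z0 - inner (z0 - p) Y + c * inner W z0 - c * inner W Y"
    using avg c by simp
  also have "\<dots> = inner (z0 - p + c *\<^sub>R W) (z0 - Y)"
    by (simp add: inner_diff_left inner_diff_right inner_add_left algebra_simps)
  also have "z0 - p + c *\<^sub>R W = Y - z0" using rel by (simp add: algebra_simps scaleR_2)
  also have "inner (Y - z0) (z0 - Y) \<le> 0"
    by (metis inner_ge_zero minus_diff_eq neg_le_0_iff_le inner_minus_left)
  finally have m0: "m \<le> 0" .
  show ?thesis using fle m0 unfolding f_def by (intro exI[of _ z0]) force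
qed

lemma minty:
  fixes G :: "'a::euclidean_space \<Rightarrow> 'a set"
  assumes Gmax: "maximal_monotone G" and c: "c > 0"
  shows "\<exists>z. \<exists>u\<in>G z. p - z = c *\<^sub>R u"
proof -
  have mono: "monotone_op G" using Gmax by (simp add: maximal_monotone_def)
  define Bl where "Bl yv = {z. inner (z + c *\<^sub>R snd yv - p) (z - fst yv) \<le> 0}" for yv :: "'a \<times> 'a"
  have cpt: "compact T" if TF: "T \<in> Bl ` graph_op G" for T
  proof -
    obtain yv where T: "T = Bl yv" using TF by blast
    have "closed T" unfolding T Bl_def
      by (intro closed_Collect_le continuous_intros)
    moreover have "T \<subseteq> cball ((p - c *\<^sub>R snd yv + fst yv) /\<^sub>R 2) (norm ((p - c *\<^sub>R snd yv - fst yv) /\<^sub>R 2))"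
    proof
      fix z assume "z \<in> T"
      then have "(norm (z - (p - c *\<^sub>R snd yv + fst yv) /\<^sub>R 2))\<^sup>2 \<le> (norm ((p - c *\<^sub>R snd yv - fst yv) /\<^sub>R 2))\<^sup>2"
        unfolding T Bl_def using quad_ball[of z "c *\<^sub>R snd yv" p "fst yv"] by simp
      then have "norm (z - (p - c *\<^sub>R snd yv + fst yv) /\<^sub>R 2) \<le> norm ((p - c *\<^sub>R snd yv - fst yv) /\<^sub>R 2)"
        by (rule power2_le_imp_le) simp
      then show "z \<in> cball ((p - c *\<^sub>R snd yv + fst yv) /\<^sub>R 2) (norm ((p - c *\<^sub>R snd yv - fst yv) /\<^sub>R 2))"
        by (simp add: dist_norm norm_minus_commute)
    qed
    then have "bounded T" using bounded_cball bounded_subset by blast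
    ultimately show ?thesis by (simp add: compact_eq_bounded_closed)
  qed
  have "\<Inter>(Bl ` graph_op G) \<noteq> {}"
  proof (rule compact_fip_Heine_Borel[OF cpt])
    fix F' assume F': "finite F'" "F' \<subseteq> Bl ` graph_op G"
    then obtain P where P: "P \<subseteq> graph_op G" "finite P" "F' = Bl ` P"
      by (metis finite_subset_image)
    show "\<Inter>F' \<noteq> {}"
    proof (cases "P = {}")
      case True then show ?thesis using P by simp
    next
      case False
      have "\<forall>i\<in>P. \<forall>j\<in>P. inner (snd i - snd j) (fst i - fst j) \<ge> 0"
      proof (intro ballI)
        fix i j assume "i \<in> P" "j \<in> P"
        then have "snd i \<in> G (fst i)" "snd j \<in> G (fst j)" using P(1) unfolding graph_op_def by auto
        then show "inner (snd i - snd j) (fst i - fst j) \<ge> 0" using mono unfolding monotone_op_def by blast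
      qed
      from finite_ext[OF P(2) False c this, of p] obtain z
        where "\<forall>i\<in>P. inner (z + c *\<^sub>R snd i - p) (z - fst i) \<le> 0" by blast
      then have "z \<in> \<Inter>F'" unfolding P(3) Bl_def by auto
      then show ?thesis by blast
    qed
  qed (simp)
  then obtain z where z: "\<forall>yv\<in>graph_op G. z \<in> Bl yv" by blast
  define u0 where "u0 = (1/c) *\<^sub>R (p - z)"
  have rel: "inner (u0 - v) (z - y) \<ge> 0" if "v \<in> G y" for y v
  proof -
    have "inner (z + c *\<^sub>R v - p) (z - y) \<le> 0"
      using z that unfolding Bl_def graph_op_def by auto
    moreover have "u0 - v = - ((1/c) *\<^sub>R (z + c *\<^sub>R v - p))"
      unfolding u0_def using c by (simp add: algebra_simps)
    ultimately show ?thesis using c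
      by (simp only: inner_minus_left inner_scaleR_left) (simp add: divide_nonpos_pos)
  qed
  define B where "B w = (if w = z then insert u0 (G w) else G w)" for w
  have "monotone_op B"
    unfolding monotone_op_def
  proof (intro allI impI)
    fix x y u v assume u: "u \<in> B x" and v: "v \<in> B y"
    show "inner (u - v) (x - y) \<ge> 0"
    proof (cases "x = z \<and> u = u0")
      case True
      show ?thesis
      proof (cases "y = z \<and> v = u0")
        case True then show ?thesis using \<open>x = z \<and> u = u0\<close> by simp
      next
        case False then have "v \<in> G y" using v by (auto simp: B_def split: if_splits)
        then show ?thesis using rel True by simp
      qed
    next
      case False then have uG: "u \<in> G x" using u by (auto simp: B_def split: if_splits)
      show ?thesis
      proof (cases "y = z \<and> v = u0")
        case True
        have "inner (u0 - u) (z - x) \<ge> 0" using rel uG by simp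
        then show ?thesis using True by (metis inner_minus_left inner_minus_right minus_diff_eq minus_minus)
      next
        case False then have "v \<in> G y" using v by (auto simp: B_def split: if_splits)
        then show ?thesis using uG mono unfolding monotone_op_def by blast
      qed
    qed
  qed
  moreover have "graph_op G \<subseteq> graph_op B" unfolding graph_op_def B_def by auto
  ultimately have "B = G" using Gmax unfolding maximal_monotone_def by blast
  moreover have "u0 \<in> B z" by (simp add: B_def)
  ultimately have "u0 \<in> G z" by simp
  moreover have "p - z = c *\<^sub>R u0" unfolding u0_def using c by simp
  ultimately show ?thesis by blast
qed

lemma op_scale_comp: "op_scale a (op_scale b G) = op_scale (a * b) G"
  by (auto simp: op_scale_def image_image fun_eq_iff)

lemma res_mem: "z \<in> resolvent (op_scale c G) p \<longleftrightarrow> (\<exists>u\<in>G z. p - z = c *\<^sub>R u)"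
  by (auto simp: resolvent_def op_scale_def image_iff)

lemma res_nonexp:
  assumes mono: "monotone_op G" and c: "c > 0"
    and z: "z \<in> resolvent (op_scale c G) p" and z': "z' \<in> resolvent (op_scale c G) q"
  shows "norm (z - z') \<le> norm (p - q)"
proof -
  obtain u where u: "u \<in> G z" "p - z = c *\<^sub>R u" using z by (auto simp: res_mem)
  obtain u' where u': "u' \<in> G z'" "q - z' = c *\<^sub>R u'" using z' by (auto simp: res_mem)
  have "inner (u - u') (z - z') \<ge> 0" using mono u u' unfolding monotone_op_def by blast
  then have "inner (c *\<^sub>R u - c *\<^sub>R u') (z - z') \<ge> 0" using c
    by (simp add: scaleR_diff_right[symmetric])
  then have "inner ((p - q) - (z - z')) (z - z') \<ge> 0" using u(2) u'(2)
    by (metis (no_types, lifting) add_diff_cancel_left' diff_add_cancel diff_diff_eq2 diff_diff_add)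
  then have "(norm (z - z'))\<^sup>2 \<le> inner (p - q) (z - z')"
    by (simp add: inner_diff_left power2_norm_eq_inner)
  also have "\<dots> \<le> norm (p - q) * norm (z - z')" by (rule norm_cauchy_schwarz)
  finally have "norm (z - z') * norm (z - z') \<le> norm (p - q) * norm (z - z')"
    by (simp add: power2_eq_square)
  then show ?thesis
    by (metis mult_right_le_imp_le norm_ge_zero order.order_iff_strict mult_cancel_right2 norm_zero)
qed

lemma res_pt:
  fixes G :: "'a::euclidean_space \<Rightarrow> 'a set"
  assumes Gmax: "maximal_monotone G" and c: "c > 0"
  shows "resolvent_pt (op_scale c G) p \<in> resolvent (op_scale c G) p"
proof -
  have mono: "monotone_op G" using Gmax by (simp add: maximal_monotone_def)
  obtain z where "z \<in> resolvent (op_scale c G) p" using minty[OF Gmax c, of p] by (auto simp: res_mem)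
  moreover have "z' = z" if "z' \<in> resolvent (op_scale c G) p" for z'
    using res_nonexp[OF mono c that \<open>z \<in> _\<close>] by simp
  ultimately show ?thesis unfolding resolvent_pt_def by (metis theI)
qed

lemma T_mem: "z \<in> resolvent (op_scale \<eta> (op_plus F G)) x \<longleftrightarrow> (\<exists>u\<in>G z. x - z = \<eta> *\<^sub>R (F z + u))"
  by (auto simp: resolvent_def op_scale_def op_plus_def image_iff)

lemma T_exists:
  fixes F :: "'a::euclidean_space \<Rightarrow> 'a"
  assumes Flip: "L-lipschitz_on UNIV F" and Gmax: "maximal_monotone G"
    and eta: "\<eta> > 0" and etaL: "\<eta> * L < 1"
  shows "\<exists>z. z \<in> resolvent (op_scale \<eta> (op_plus F G)) x"
proof -
  have mono: "monotone_op G" using Gmax by (simp add: maximal_monotone_def)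
  have L0: "L \<ge> 0" using Flip lipschitz_on_nonneg by blast
  define J where "J p = resolvent_pt (op_scale \<eta> G) p" for p
  define f where "f z = J (x - \<eta> *\<^sub>R F z)" for z
  have "dist (f z) (f z') \<le> (\<eta> * L) * dist z z'" for z z'
  proof -
    have "dist (f z) (f z') \<le> norm ((x - \<eta> *\<^sub>R F z) - (x - \<eta> *\<^sub>R F z'))"
      unfolding f_def J_def dist_norm by (rule res_nonexp[OF mono eta res_pt[OF Gmax eta] res_pt[OF Gmax eta]])
    also have "\<dots> = \<eta> * dist (F z) (F z')" using eta
      by (simp add: dist_norm scaleR_diff_right[symmetric] norm_minus_commute)
    also have "\<dots> \<le> \<eta> * (L * dist z z')"
      using lipschitz_onD[OF Flip] eta by simp
    finally show ?thesis by simp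
  qed
  then obtain z where z: "f z = z"
    using banach_fix_type[of "\<eta> * L" f] L0 eta etaL by auto
  have "z \<in> resolvent (op_scale \<eta> G) (x - \<eta> *\<^sub>R F z)"
    using res_pt[OF Gmax eta] z unfolding f_def J_def by metis
  then obtain u where "u \<in> G z" "x - \<eta> *\<^sub>R F z - z = \<eta> *\<^sub>R u" by (auto simp: res_mem)
  then have "z \<in> resolvent (op_scale \<eta> (op_plus F G)) x" unfolding T_mem
    by (intro bexI[of _ u]) (auto simp: algebra_simps)
  then show ?thesis by blast
qed

lemma fbf_contract:
  fixes F :: "'a::euclidean_space \<Rightarrow> 'a"
  assumes Flip: "L-lipschitz_on UNIV F" and Gmax: "maximal_monotone G"
    and eta: "\<eta> > 0" and etaL: "\<eta> * L < 1"
    and p: "p \<in> resolvent (op_scale \<eta> (op_plus F G)) x"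
  shows "(norm (fbf_step (1 / (2 * (1 + \<eta> * L))) (op_scale \<eta> G) (\<lambda>y. y + \<eta> *\<^sub>R F y - x) z - p))\<^sup>2
         \<le> (3 + (1 - \<eta>*L)/(1 + \<eta>*L)) / (3 + 4 * ((1 - \<eta>*L)/(1 + \<eta>*L))) * (norm (z - p))\<^sup>2"
proof -
  define \<tau> where "\<tau> = 1 / (2 * (1 + \<eta> * L))"
  define \<kappa> where "\<kappa> = (1 - \<eta>*L)/(1 + \<eta>*L)"
  define Bf where "Bf y = y + \<eta> *\<^sub>R F y - x" for y
  have mono: "monotone_op G" using Gmax by (simp add: maximal_monotone_def)
  have L0: "L \<ge> 0" using Flip lipschitz_on_nonneg by blast
  have eL0: "\<eta> * L \<ge> 0" using L0 eta by simp
  have tau0: "\<tau> > 0" unfolding \<tau>_def using eL0 by simp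
  have tauL: "\<tau> * (1 + \<eta> * L) = 1/2" unfolding \<tau>_def using eL0 by simp
  have kap: "2 * \<tau> * (1 - \<eta> * L) = \<kappa>" unfolding \<tau>_def \<kappa>_def using eL0 by (simp add: field_simps)
  have k0: "\<kappa> > 0" unfolding \<kappa>_def using eL0 etaL by simp
  have FL: "norm (F a - F b) \<le> L * norm (a - b)" for a b
    using lipschitz_onD[OF Flip] by (simp add: dist_norm)
  have Bstrong: "inner (Bf a - Bf b) (a - b) \<ge> (1 - \<eta>*L) * (norm (a - b))\<^sup>2" for a b
  proof -
    have e: "Bf a - Bf b = (a - b) + \<eta> *\<^sub>R (F a - F b)" unfolding Bf_def by (simp add: algebra_simps)
    have "- inner (F a - F b) (a - b) \<le> norm (F a - F b) * norm (a - b)"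
      using norm_cauchy_schwarz[of "-(F a - F b)" "a - b"] by (simp only: inner_minus_left norm_minus_cancel)
    also have "\<dots> \<le> L * norm (a - b) * norm (a - b)" using FL[of a b] by (simp add: mult_right_mono)
    finally have "- inner (F a - F b) (a - b) \<le> L * (norm (a - b))\<^sup>2" by (simp add: power2_eq_square)
    then have "- (\<eta> * inner (F a - F b) (a - b)) \<le> \<eta> * (L * (norm (a - b))\<^sup>2)"
      using eta by (metis mult_left_mono mult_minus_right less_imp_le)
    then show ?thesis unfolding e by (simp add: inner_add_left power2_norm_eq_inner algebra_simps)
  qed
  have Blip: "norm (Bf a - Bf b) \<le> (1 + \<eta>*L) * norm (a - b)" for a b
  proof -
    have e: "Bf a - Bf b = (a - b) + \<eta> *\<^sub>R (F a - F b)" unfolding Bf_def by (simp add: algebra_simps)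
    have "norm (Bf a - Bf b) \<le> norm (a - b) + \<eta> * norm (F a - F b)"
      unfolding e using norm_triangle_ineq[of "a - b" "\<eta> *\<^sub>R (F a - F b)"] eta by simp
    also have "\<dots> \<le> norm (a - b) + \<eta> * (L * norm (a - b))" using FL[of a b] eta by simp
    finally show ?thesis by (simp add: algebra_simps)
  qed
  define y where "y = z - \<tau> *\<^sub>R Bf z"
  define zh where "zh = resolvent_pt (op_scale (\<tau> * \<eta>) G) y"
  have te: "\<tau> * \<eta> > 0" using tau0 eta by simp
  have step: "fbf_step \<tau> (op_scale \<eta> G) Bf z = zh + \<tau> *\<^sub>R Bf z - \<tau> *\<^sub>R Bf zh"
    unfolding fbf_step_def Let_def op_scale_comp zh_def y_def ..
  obtain u where u: "u \<in> G zh" "y - zh = (\<tau> * \<eta>) *\<^sub>R u"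
    using res_pt[OF Gmax te, of y] unfolding zh_def[symmetric] by (auto simp: res_mem)
  obtain v where v: "v \<in> G p" "x - p = \<eta> *\<^sub>R (F p + v)" using p unfolding T_mem by blast
  have "inner (u - v) (zh - p) \<ge> 0" using mono u v unfolding monotone_op_def by blast
  then have "inner ((\<tau> * \<eta>) *\<^sub>R u - (\<tau> * \<eta>) *\<^sub>R v) (zh - p) \<ge> 0" using te
    by (simp add: scaleR_diff_right[symmetric])
  moreover have "(\<tau> * \<eta>) *\<^sub>R v = - \<tau> *\<^sub>R Bf p"
  proof -
    have "\<eta> *\<^sub>R v = x - p - \<eta> *\<^sub>R F p" using v(2) by (simp add: algebra_simps)
    have "(\<tau> * \<eta>) *\<^sub>R v = \<tau> *\<^sub>R (\<eta> *\<^sub>R v)" by simp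
    also have "\<dots> = \<tau> *\<^sub>R (x - p - \<eta> *\<^sub>R F p)" using \<open>\<eta> *\<^sub>R v = _\<close> by simp
    also have "\<dots> = - \<tau> *\<^sub>R Bf p" unfolding Bf_def by (simp add: algebra_simps)
    finally show ?thesis .
  qed
  then have monoineq: "inner ((z - zh) - \<tau> *\<^sub>R (Bf z - Bf zh) - \<tau> *\<^sub>R (Bf zh - Bf p)) (zh - p) \<ge> 0"
  proof -
    have "(\<tau> * \<eta>) *\<^sub>R u = z - \<tau> *\<^sub>R Bf z - zh" using u(2) unfolding y_def by simp
    then have "(\<tau> * \<eta>) *\<^sub>R u - (\<tau> * \<eta>) *\<^sub>R v
        = (z - zh) - \<tau> *\<^sub>R (Bf z - Bf zh) - \<tau> *\<^sub>R (Bf zh - Bf p)"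
      using \<open>(\<tau> * \<eta>) *\<^sub>R v = _\<close> by (simp add: algebra_simps)
    then show ?thesis using calculation by simp
  qed
  define a where "a = z - zh"
  define b where "b = zh - p"
  define g where "g = \<tau> *\<^sub>R (Bf z - Bf zh)"
  define h where "h = \<tau> *\<^sub>R (Bf zh - Bf p)"
  have m1: "inner a b \<ge> inner g b + inner h b"
    using monoineq unfolding a_def[symmetric] b_def[symmetric] g_def[symmetric] h_def[symmetric]
    by (simp add: inner_diff_left)
  have zp: "z - p = a + b" unfolding a_def b_def by simp
  have sp: "fbf_step \<tau> (op_scale \<eta> G) Bf z - p = b + g" unfolding step b_def g_def by (simp add: algebra_simps)
  have gle: "norm g \<le> norm a / 2"
  proof -
    have "norm g = \<tau> * norm (Bf z - Bf zh)" unfolding g_def using tau0 by simp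
    also have "\<dots> \<le> \<tau> * ((1 + \<eta>*L) * norm a)" unfolding a_def using Blip tau0 by (simp add: mult_left_mono)
    finally show ?thesis using tauL by (simp add: mult.assoc[symmetric])
  qed
  have g2: "(norm g)\<^sup>2 \<le> (norm a)\<^sup>2 / 4"
  proof -
    have "(norm g)\<^sup>2 \<le> (norm a / 2)\<^sup>2" using gle by (simp add: power_mono)
    then show ?thesis by (simp add: power_divide)
  qed
  have hb: "inner h b \<ge> \<kappa> / 2 * (norm b)\<^sup>2"
  proof -
    have "inner h b = \<tau> * inner (Bf zh - Bf p) (zh - p)" unfolding h_def b_def by simp
    also have "\<dots> \<ge> \<tau> * ((1 - \<eta>*L) * (norm (zh - p))\<^sup>2)" using Bstrong tau0 by (simp add: mult_left_mono)
    also have "\<tau> * ((1 - \<eta>*L) * (norm (zh - p))\<^sup>2) = (\<tau> * (1 - \<eta>*L)) * (norm (zh - p))\<^sup>2"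
      by (simp only: mult.assoc)
    also have "\<tau> * (1 - \<eta>*L) = \<kappa> / 2" using kap by linarith
    finally show ?thesis unfolding b_def .
  qed
  have e1: "(norm (b + g))\<^sup>2 = (norm b)\<^sup>2 + 2 * inner b g + (norm g)\<^sup>2"
    by (simp add: power2_norm_eq_inner inner_add_left inner_add_right inner_commute)
  have e2: "(norm (a + b))\<^sup>2 = (norm a)\<^sup>2 + 2 * inner a b + (norm b)\<^sup>2"
    by (simp add: power2_norm_eq_inner inner_add_left inner_add_right inner_commute)
  have main: "(norm (b + g))\<^sup>2 \<le> (norm (a + b))\<^sup>2 - 3/4 * (norm a)\<^sup>2 - \<kappa> * (norm b)\<^sup>2"
    using e1 e2 m1 g2 hb by (simp add: inner_commute) 
  define A where "A = norm a"
  define B where "B = norm b"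
  have nab: "norm (a + b) \<le> A + B" unfolding A_def B_def by (rule norm_triangle_ineq)
  have "(norm (a + b))\<^sup>2 \<le> (A + B)\<^sup>2" using nab by (simp add: power_mono)
  have sq: "3 * \<kappa> * (A + B)\<^sup>2 \<le> (3 + 4 * \<kappa>) * (3/4 * A\<^sup>2 + \<kappa> * B\<^sup>2)"
  proof -
    have "0 \<le> (3/2 * A - 2 * \<kappa> * B)\<^sup>2" by simp
    moreover have "(3 + 4*\<kappa>)*(3/4 * A\<^sup>2 + \<kappa>*B\<^sup>2) - 3*\<kappa>*(A+B)\<^sup>2 = (3/2*A - 2*\<kappa>*B)\<^sup>2"
      by (simp add: power2_eq_square field_simps)
    ultimately show ?thesis by linarith
  qed
  have "(3 + 4 * \<kappa>) * (norm (b + g))\<^sup>2 \<le> (3 + \<kappa>) * (norm (a + b))\<^sup>2"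
  proof -
    have "(3 + 4 * \<kappa>) * (norm (b + g))\<^sup>2 \<le> (3 + 4 * \<kappa>) * ((norm (a + b))\<^sup>2 - 3/4 * A\<^sup>2 - \<kappa> * B\<^sup>2)"
      using main k0 unfolding A_def B_def by (simp add: mult_left_mono)
    also have "\<dots> = (3 + 4 * \<kappa>) * (norm (a + b))\<^sup>2 - (3 + 4 * \<kappa>) * (3/4 * A\<^sup>2 + \<kappa> * B\<^sup>2)"
      by (simp add: algebra_simps)
    also have "\<dots> \<le> (3 + 4 * \<kappa>) * (norm (a + b))\<^sup>2 - 3 * \<kappa> * (norm (a + b))\<^sup>2"
      using sq \<open>(norm (a + b))\<^sup>2 \<le> (A + B)\<^sup>2\<close> k0
      by (smt (verit, ccfv_SIG) mult_left_mono)
    finally show ?thesis by (simp add: algebra_simps)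
  qed
  then have "(norm (b + g))\<^sup>2 \<le> (3 + \<kappa>) / (3 + 4 * \<kappa>) * (norm (a + b))\<^sup>2"
    using k0 by (simp add: field_simps)
  then show ?thesis unfolding \<tau>_def[symmetric] \<kappa>_def[symmetric] sp[symmetric] zp[symmetric]
    unfolding Bf_def[symmetric] .
qed


lemma q2_exp:
  fixes k :: real assumes "0 < k" "k \<le> 1"
  shows "(3 + k) / (3 + 4 * k) \<le> exp (- k / 2)"
proof -
  have e: "exp (k/2) \<le> 1 + k/2 + (k/2)\<^sup>2" using assms by (intro exp_bound) auto
  have kk: "k * k \<le> k" "k * k * k \<le> k" using assms
    by (simp_all add: mult_le_cancel_left1 mult_le_one)
  have "(3 + k) * (1 + k/2 + (k/2)\<^sup>2) \<le> 3 + 4 * k"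
  proof -
    have "(3 + k) * (1 + k/2 + (k/2)\<^sup>2) = 3 + 5/2 * k + 5/4 * (k * k) + 1/4 * (k * k * k)"
      by (simp add: power2_eq_square field_simps)
    then show ?thesis using kk by linarith
  qed
  then have "(3 + k) * exp (k/2) \<le> 3 + 4 * k"
    using e assms by (smt (verit) mult_left_mono)
  then have "(3 + k) \<le> (3 + 4 * k) * exp (- k/2)"
    using assms by (simp add: exp_minus field_simps)
  then show ?thesis using assms by (simp add: divide_le_eq mult.commute)
qed

lemma fbf_rate:
  fixes F :: "'a::euclidean_space \<Rightarrow> 'a"
  assumes Flip: "L-lipschitz_on UNIV F" and Gmax: "maximal_monotone G"
    and eta: "\<eta> > 0" and etaL: "\<eta> * L < 1"
    and p: "p \<in> resolvent (op_scale \<eta> (op_plus F G)) x"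
    and N: "real N \<ge> 4 * (1 + \<eta> * L) / (1 - \<eta> * L) * l" and l: "l \<ge> 0"
  shows "norm (FBF x N (op_scale \<eta> G) (\<lambda>y. y + \<eta> *\<^sub>R F y) (1 + \<eta> * L) - p) \<le> exp (- l) * norm (x - p)"
proof -
  define \<kappa> where "\<kappa> = (1 - \<eta>*L)/(1 + \<eta>*L)"
  define q where "q = (3 + \<kappa>) / (3 + 4 * \<kappa>)"
  define stp where "stp = fbf_step (1 / (2 * (1 + \<eta> * L))) (op_scale \<eta> G) (\<lambda>y. y + \<eta> *\<^sub>R F y - x)"
  have L0: "L \<ge> 0" using Flip lipschitz_on_nonneg by blast
  have eL0: "\<eta> * L \<ge> 0" using L0 eta by simp
  have k0: "\<kappa> > 0" "\<kappa> \<le> 1" unfolding \<kappa>_def using eL0 etaL by auto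
  have q0: "q \<ge> 0" unfolding q_def using k0 by simp
  have c1: "(norm (stp z - p))\<^sup>2 \<le> q * (norm (z - p))\<^sup>2" for z
    unfolding stp_def q_def \<kappa>_def by (rule fbf_contract[OF Flip Gmax eta etaL p])
  have it: "(norm ((stp ^^ n) z - p))\<^sup>2 \<le> q ^ n * (norm (z - p))\<^sup>2" for n z
  proof (induction n)
    case 0 then show ?case by simp
  next
    case (Suc n)
    have "(norm ((stp ^^ Suc n) z - p))\<^sup>2 \<le> q * (norm ((stp ^^ n) z - p))\<^sup>2" using c1 by simp
    also have "\<dots> \<le> q * (q ^ n * (norm (z - p))\<^sup>2)" using Suc q0 by (simp add: mult_left_mono)
    finally show ?case by (simp add: mult.assoc)
  qed
  have "q \<le> exp (- \<kappa> / 2)" unfolding q_def using q2_exp k0 by blast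
  then have "q ^ N \<le> exp (- \<kappa> / 2) ^ N" using q0 by (simp add: power_mono)
  also have "\<dots> = exp (- \<kappa> / 2 * N)" by (simp add: exp_of_nat_mult[symmetric] mult.commute)
  also have "\<dots> \<le> exp (- 2 * l)"
  proof -
    have "4 / \<kappa> * l \<le> N" using N unfolding \<kappa>_def using eL0 by (simp add: field_simps)
    then have "4 * l \<le> \<kappa> * N" using k0 by (simp add: field_simps)
    then show ?thesis by simp
  qed
  finally have qN: "q ^ N \<le> exp (- 2 * l)" .
  have "(norm ((stp ^^ N) x - p))\<^sup>2 \<le> exp (- 2 * l) * (norm (x - p))\<^sup>2"
    using it[of N x] qN by (smt (verit) mult_right_mono zero_le_power2)
  also have "\<dots> = (exp (- l) * norm (x - p))\<^sup>2"
    by (simp add: power_mult_distrib exp_double[symmetric] power2_eq_square exp_add[symmetric])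
  finally have "norm ((stp ^^ N) x - p) \<le> exp (- l) * norm (x - p)"
    by (rule power2_le_imp_le) simp
  then show ?thesis unfolding FBF_def Let_def stp_def by simp
qed

lemma term_bound:
  fixes n :: nat assumes n: "n \<ge> 1"
  shows "1 / ((real n + 1) * (ln (real n + 2))\<^sup>2) \<le> 2 * (1 / ln (real n + 1) - 1 / ln (real n + 2))"
proof -
  define a where "a = ln (real n + 1)"
  define b where "b = ln (real n + 2)"
  have a0: "a > 0" unfolding a_def using n by simp
  have ab: "a \<le> b" unfolding a_def b_def by simp
  have b0: "b > 0" using a0 ab by simp
  have "ln ((real n + 1) / (real n + 2)) \<le> (real n + 1) / (real n + 2) - 1"
    by (rule ln_le_minus_one) simp
  then have "a - b \<le> - 1 / (real n + 2)"
    unfolding a_def b_def by (simp add: ln_div field_simps)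
  then have bma: "b - a \<ge> 1 / (real n + 2)" by simp
  have "1 / ((real n + 1) * b\<^sup>2) \<le> 2 * (1 / ((real n + 2) * b\<^sup>2))"
  proof -
    have p1: "0 < (real n + 1) * b\<^sup>2" "0 < (real n + 2) * b\<^sup>2" using b0 by simp_all
    have "0 \<le> real n * b\<^sup>2" by simp
    then have "(real n + 2) * b\<^sup>2 \<le> 2 * ((real n + 1) * b\<^sup>2)" by (simp add: algebra_simps)
    then show ?thesis using p1 by (simp add: field_simps)
  qed
  also have "1 / ((real n + 2) * b\<^sup>2) \<le> (b - a) / (b * b)"
  proof -
    have "1 / ((real n + 2) * b\<^sup>2) = (1 / (real n + 2)) / (b * b)" by (simp add: power2_eq_square)
    also have "\<dots> \<le> (b - a) / (b * b)" using bma b0 by (intro divide_right_mono) auto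
    finally show ?thesis .
  qed
  also have "(b - a) / (b * b) \<le> (b - a) / (a * b)"
    using a0 b0 ab bma by (intro divide_left_mono) (auto intro: mult_right_mono)
  also have "(b - a) / (a * b) = 1 / a - 1 / b" using a0 b0 by (simp add: field_simps)
  finally show ?thesis unfolding a_def b_def by simp
qed

lemma tsum_bound:
  fixes n :: nat assumes n: "n \<ge> 1"
  shows "(\<Sum>k<n. 1 / ((real k + 1) * (ln (real k + 2))\<^sup>2)) \<le> 1 / (ln 2)\<^sup>2 + 2 / ln 2 - 2 / ln (real n + 1)"
  using n
proof (induction n rule: dec_induct)
  case base
  then show ?case by simp
next
  case (step n)
  have "(\<Sum>k<Suc n. 1 / ((real k + 1) * (ln (real k + 2))\<^sup>2))
      = (\<Sum>k<n. 1 / ((real k + 1) * (ln (real k + 2))\<^sup>2)) + 1 / ((real n + 1) * (ln (real n + 2))\<^sup>2)"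
    by simp
  also have "\<dots> \<le> 1 / (ln 2)\<^sup>2 + 2 / ln 2 - 2 / ln (real n + 1) + 2 * (1 / ln (real n + 1) - 1 / ln (real n + 2))"
    using step.IH term_bound[OF step.hyps(1)] by linarith
  also have "\<dots> = 1 / (ln 2)\<^sup>2 + 2 / ln 2 - 2 / ln (real (Suc n) + 1)"
    by (simp add: algebra_simps)
  finally show ?case .
qed

lemma delta_sum:
  "(\<Sum>k<n. 1 / (8 * (real k + 1) * (ln (real k + 2))\<^sup>2)) \<le> 1"
proof (cases "n \<ge> 1")
  case False then have "n = 0" by simp
  then show ?thesis by simp
next
  case True
  have l2: "ln (2::real) \<ge> 2/3" by (rule ln2_ge_two_thirds)
  have "1 / (ln (2::real))\<^sup>2 \<le> 9/4"
  proof -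
    have "(2/3)\<^sup>2 \<le> (ln (2::real))\<^sup>2" using l2 by (intro power_mono) auto
    then show ?thesis by (simp add: field_simps power2_eq_square)
  qed
  moreover have "2 / ln (2::real) \<le> 3" using l2 by (simp add: field_simps)
  moreover have "2 / ln (real n + 1) \<ge> 0" using True by simp
  ultimately have "(\<Sum>k<n. 1 / ((real k + 1) * (ln (real k + 2))\<^sup>2)) \<le> 8"
    using tsum_bound[OF True] by linarith
  moreover have "(\<Sum>k<n. 1 / (8 * (real k + 1) * (ln (real k + 2))\<^sup>2))
      = (\<Sum>k<n. 1 / ((real k + 1) * (ln (real k + 2))\<^sup>2)) / 8"
    unfolding sum_divide_distrib by (rule sum.cong) (simp_all add: algebra_simps)
  ultimately show ?thesis by simp
qed

lemma T_unique:
  fixes F :: "'a::euclidean_space \<Rightarrow> 'a"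
  assumes Flip: "L-lipschitz_on UNIV F" and mono: "monotone_op G"
    and eta: "\<eta> > 0" and etaL: "\<eta> * L < 1"
    and z: "z \<in> resolvent (op_scale \<eta> (op_plus F G)) x"
    and z': "z' \<in> resolvent (op_scale \<eta> (op_plus F G)) x"
  shows "z = z'"
proof -
  obtain u where u: "u \<in> G z" "x - z = \<eta> *\<^sub>R (F z + u)" using z unfolding T_mem by blast
  obtain u' where u': "u' \<in> G z'" "x - z' = \<eta> *\<^sub>R (F z' + u')" using z' unfolding T_mem by blast
  have m: "inner (u - u') (z - z') \<ge> 0" using mono u u' unfolding monotone_op_def by blast
  have e: "\<eta> *\<^sub>R (u - u') = (z' - z) - \<eta> *\<^sub>R (F z - F z')"
    using u(2) u'(2) by (simp add: algebra_simps)
  have "0 \<le> \<eta> * inner (u - u') (z - z')" using m eta by simp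
  also have "\<dots> = inner (\<eta> *\<^sub>R (u - u')) (z - z')" by simp
  also have "\<dots> = - (norm (z - z'))\<^sup>2 - \<eta> * inner (F z - F z') (z - z')"
    unfolding e by (simp add: inner_diff_left power2_norm_eq_inner algebra_simps)
  finally have 1: "(norm (z - z'))\<^sup>2 \<le> - \<eta> * inner (F z - F z') (z - z')" by simp
  have "- inner (F z - F z') (z - z') \<le> norm (F z - F z') * norm (z - z')"
    using norm_cauchy_schwarz[of "-(F z - F z')" "z - z'"] by (simp only: inner_minus_left norm_minus_cancel)
  also have "\<dots> \<le> L * norm (z - z') * norm (z - z')"
    using lipschitz_onD[OF Flip, of z z'] by (simp add: dist_norm mult_right_mono)
  finally have "\<eta> * (- inner (F z - F z') (z - z')) \<le> \<eta> * (L * norm (z - z') * norm (z - z'))"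
    using eta by (intro mult_left_mono) auto
  then have "- \<eta> * inner (F z - F z') (z - z') \<le> \<eta> * (L * (norm (z - z'))\<^sup>2)"
    by (simp add: power2_eq_square mult.assoc)
  with 1 have "(1 - \<eta> * L) * (norm (z - z'))\<^sup>2 \<le> 0" by (simp add: algebra_simps)
  then have "(norm (z - z'))\<^sup>2 \<le> 0" using etaL by (simp add: mult_le_0_iff)
  then show ?thesis by simp
qed

theorem corollary3p2:
  fixes F :: "'a::euclidean_space \<Rightarrow> 'a"
    and G :: "'a \<Rightarrow> 'a set"
    and L \<eta> \<rho> \<epsilon> :: real
    and xs x0 :: 'a
    and x :: "nat \<Rightarrow> 'a"
  assumes Flip: "L-lipschitz_on UNIV F"
    and Gmax: "maximal_monotone G"
    and xs_sol: "0 \<in> op_plus F G xs"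
    and xs_weak_minty: "\<forall>y u. u \<in> op_plus F G y \<longrightarrow> inner u (y - xs) \<ge> - \<rho> * (norm u)\<^sup>2"
    and rho_pos: "\<rho> > 0"
    and eta_L: "\<eta> * L < 1"
    and rho_eta: "\<rho> < \<eta>"
    and x_init: "x 0 = x0"
    and x_step: "\<forall>k. x (Suc k) =
                   (1 - (1 - \<rho> / \<eta>)) *\<^sub>R x k
                   + (1 - \<rho> / \<eta>) *\<^sub>R
                       FBF (x k) (inner_iters \<eta> L k) (op_scale \<eta> G)
                           (\<lambda>y. y + \<eta> *\<^sub>R F y) (1 + \<eta> * L)"
    and eps_pos: "\<epsilon> > 0"
  shows "\<exists>K::nat. 1 \<le> K
     \<and> real K \<le> max 1 \<lceil>11 * (norm (x0 - xs))\<^sup>2 / ((\<eta> - \<rho>)\<^sup>2 * \<epsilon>\<^sup>2)\<rceil>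
     \<and> (\<exists>k<K. resolvent (op_scale \<eta> (op_plus F G)) (x k) \<noteq> {}
              \<and> (\<forall>j \<in> resolvent (op_scale \<eta> (op_plus F G)) (x k).
                    norm (x k - j) / \<eta> \<le> \<epsilon>))
     \<and> (let B = max 1 \<lceil>11 * (norm (x0 - xs))\<^sup>2 / ((\<eta> - \<rho>)\<^sup>2 * \<epsilon>\<^sup>2)\<rceil>
        in real (\<Sum>k<K. inner_iters \<eta> L k)
             \<le> real_of_int B * (1 + 4 * (1 + \<eta> * L) / (1 - \<eta> * L)
                   * ln (8 * real_of_int B * (ln (real_of_int B + 1))\<^sup>2)))"
proof -
  have L0: "L \<ge> 0" using Flip lipschitz_on_nonneg by blast
  have eta: "\<eta> > 0" using rho_pos rho_eta by simp
  have eL0: "\<eta> * L \<ge> 0" using L0 eta by simp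
  have mono: "monotone_op G" using Gmax by (simp add: maximal_monotone_def)
  define \<alpha> where "\<alpha> = 1 - \<rho> / \<eta>"
  have a0: "\<alpha> > 0" unfolding \<alpha>_def using rho_eta eta by (simp add: field_simps)
  have rhoeta: "\<rho> / \<eta> = 1 - \<alpha>" unfolding \<alpha>_def by simp
  have aeta: "\<alpha> * \<eta> = \<eta> - \<rho>" unfolding \<alpha>_def using eta by (simp add: field_simps)
  have "\<forall>k. \<exists>z. z \<in> resolvent (op_scale \<eta> (op_plus F G)) (x k)"
    using T_exists[OF Flip Gmax eta eta_L] by blast
  then obtain P where P: "\<And>k. P k \<in> resolvent (op_scale \<eta> (op_plus F G)) (x k)" by metis
  define r where "r k = norm (x k - P k)" for k
  define d where "d k = norm (x k - xs)" for k
  define \<delta> where "\<delta> k = 1 / (8 * (real k + 1) * (ln (real k + 2))\<^sup>2)" for k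
  define l where "l k = ln (8 * real (k + 1) * (ln (real (k + 2)))\<^sup>2)" for k
  define c where "c = 4 * (1 + \<eta> * L) / (1 - \<eta> * L)"
  have c0: "c > 0" unfolding c_def using eL0 eta_L by simp
  have r0: "r k \<ge> 0" "d k \<ge> 0" for k unfolding r_def d_def by simp_all
  have \<delta>0: "\<delta> k \<ge> 0" for k unfolding \<delta>_def by simp
  have argpos: "8 * real (k + 1) * (ln (real (k + 2)))\<^sup>2 \<ge> 1" for k
  proof -
    have "ln (2::real) \<le> ln (real (k + 2))" by simp
    then have "2/3 \<le> ln (real (k + 2))" using ln2_ge_two_thirds by linarith
    then have "(2/3)\<^sup>2 \<le> (ln (real (k + 2)))\<^sup>2" by (intro power_mono) auto
    moreover have "1 \<le> real (k + 1)" by simp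
    ultimately have "1 * (2/3)\<^sup>2 \<le> real (k + 1) * (ln (real (k + 2)))\<^sup>2"
      by (intro mult_mono) auto
    then have "4/9 \<le> real (k + 1) * (ln (real (k + 2)))\<^sup>2" by (simp add: power2_eq_square)
    then show ?thesis by linarith
  qed
  have l0: "l k \<ge> 0" for k unfolding l_def using argpos[of k] by simp
  have dl: "\<delta> k = exp (- l k)" for k
  proof -
    have "exp (- l k) = 1 / (8 * real (k + 1) * (ln (real (k + 2)))\<^sup>2)"
      unfolding l_def using argpos[of k] by (simp add: exp_minus inverse_eq_divide)
    then show ?thesis unfolding \<delta>_def by (simp add: add.commute)
  qed
  have Nk: "real (inner_iters \<eta> L k) \<ge> c * l k" for k
    unfolding inner_iters_def c_def l_def by (rule real_nat_ceiling_ge)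
  define z where "z k = FBF (x k) (inner_iters \<eta> L k) (op_scale \<eta> G) (\<lambda>y. y + \<eta> *\<^sub>R F y) (1 + \<eta> * L)" for k
  have err: "norm (z k - P k) \<le> \<delta> k * r k" for k
    using fbf_rate[OF Flip Gmax eta eta_L P[of k] _ l0[of k]] Nk[of k]
    unfolding z_def dl r_def c_def by blast
  have exact: "(norm (x k + \<alpha> *\<^sub>R (P k - x k) - xs))\<^sup>2 \<le> (d k)\<^sup>2 - \<alpha>\<^sup>2 * (r k)\<^sup>2" for k
  proof -
    obtain v where v: "v \<in> G (P k)" "x k - P k = \<eta> *\<^sub>R (F (P k) + v)" using P[of k] unfolding T_mem by blast
    define w where "w = x k - P k"
    have "(1/\<eta>) *\<^sub>R w = F (P k) + v" unfolding w_def v(2) using eta by simp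
    then have "(1/\<eta>) *\<^sub>R w \<in> op_plus F G (P k)" unfolding op_plus_def using v(1) by auto
    then have wm: "inner ((1/\<eta>) *\<^sub>R w) (P k - xs) \<ge> - \<rho> * (norm ((1/\<eta>) *\<^sub>R w))\<^sup>2"
      using xs_weak_minty by blast
    have wi: "inner w (P k - xs) \<ge> - (1 - \<alpha>) * (norm w)\<^sup>2"
    proof -
      have "inner w (P k - xs) / \<eta> \<ge> - (\<rho> * (norm w / \<eta>)\<^sup>2)"
        using wm eta by simp
      then have "\<eta> * (inner w (P k - xs) / \<eta>) \<ge> \<eta> * (- (\<rho> * (norm w / \<eta>)\<^sup>2))"
        using eta by (intro mult_left_mono) auto
      then have "inner w (P k - xs) \<ge> - (\<rho> / \<eta>) * (norm w)\<^sup>2"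
        using eta by (simp add: power2_eq_square field_simps)
      then show ?thesis unfolding rhoeta .
    qed
    have e1: "x k + \<alpha> *\<^sub>R (P k - x k) - xs = (x k - xs) - \<alpha> *\<^sub>R w" unfolding w_def by (simp add: algebra_simps)
    have e2: "(norm ((x k - xs) - \<alpha> *\<^sub>R w))\<^sup>2 = (d k)\<^sup>2 - 2 * \<alpha> * inner w (x k - xs) + \<alpha>\<^sup>2 * (r k)\<^sup>2"
      unfolding d_def r_def w_def[symmetric] power2_norm_eq_inner
      by (simp add: inner_diff_left inner_diff_right inner_commute power2_eq_square algebra_simps)
    have e3: "inner w (x k - xs) = (r k)\<^sup>2 + inner w (P k - xs)"
    proof -
      have "x k - xs = w + (P k - xs)" unfolding w_def by simp
      then show ?thesis unfolding r_def w_def[symmetric] power2_norm_eq_inner by (simp only: inner_add_right)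
    qed
    have "inner w (x k - xs) \<ge> \<alpha> * (r k)\<^sup>2" using e3 wi unfolding r_def w_def[symmetric] by (simp add: algebra_simps)
    then have "2 * \<alpha> * inner w (x k - xs) \<ge> 2 * \<alpha> * (\<alpha> * (r k)\<^sup>2)" using a0 by (intro mult_left_mono) auto
    then show ?thesis unfolding e1 e2 by (simp add: power2_eq_square algebra_simps)
  qed
  have xs_eq: "x (Suc k) = (x k + \<alpha> *\<^sub>R (P k - x k)) + \<alpha> *\<^sub>R (z k - P k)" for k
    using x_step unfolding z_def \<alpha>_def by (simp add: algebra_simps)
  have dstep: "(d (Suc k))\<^sup>2 \<le> (1 + \<delta> k)\<^sup>2 * (d k)\<^sup>2 - \<alpha>\<^sup>2 * (r k)\<^sup>2" for k
  proof -
    define s where "s = norm (x k + \<alpha> *\<^sub>R (P k - x k) - xs)"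
    have "d (Suc k) = norm ((x k + \<alpha> *\<^sub>R (P k - x k) - xs) + \<alpha> *\<^sub>R (z k - P k))"
      unfolding d_def xs_eq by (simp add: algebra_simps)
    also have "\<dots> \<le> s + \<alpha> * norm (z k - P k)"
      unfolding s_def using norm_triangle_ineq[of "x k + \<alpha> *\<^sub>R (P k - x k) - xs" "\<alpha> *\<^sub>R (z k - P k)"] a0 by simp
    also have "\<dots> \<le> s + \<alpha> * (\<delta> k * r k)" using err[of k] a0 by (simp add: mult_left_mono)
    finally have ds: "d (Suc k) \<le> s + \<alpha> * (\<delta> k * r k)" .
    have s0: "s \<ge> 0" unfolding s_def by simp
    have s2: "s\<^sup>2 \<le> (d k)\<^sup>2 - (\<alpha> * r k)\<^sup>2" using exact[of k] unfolding s_def by (simp add: power_mult_distrib)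
    have "(\<alpha> * r k)\<^sup>2 \<ge> 0" "s\<^sup>2 \<ge> 0" by simp_all
    then have ss: "s\<^sup>2 \<le> (d k)\<^sup>2" and aa: "(\<alpha> * r k)\<^sup>2 \<le> (d k)\<^sup>2" using s2 by linarith+
    have sd: "s \<le> d k" using power2_le_imp_le[OF ss r0(2)] .
    have ar0: "\<alpha> * r k \<ge> 0" using a0 r0 by simp
    have ar: "\<alpha> * r k \<le> d k" using power2_le_imp_le[OF aa r0(2)] .
    have m1: "s * (\<alpha> * r k) \<le> d k * d k" using sd ar s0 ar0 by (intro mult_mono) auto
    have m2: "(\<alpha> * r k)\<^sup>2 \<le> (d k)\<^sup>2" using ar ar0 by (intro power_mono) auto
    have m1': "2 * \<delta> k * (s * (\<alpha> * r k)) \<le> 2 * \<delta> k * (d k * d k)" using m1 \<delta>0[of k] by (intro mult_left_mono) auto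
    have m2': "(\<delta> k)\<^sup>2 * (\<alpha> * r k)\<^sup>2 \<le> (\<delta> k)\<^sup>2 * (d k)\<^sup>2" using m2 by (intro mult_left_mono) auto
    have "(d (Suc k))\<^sup>2 \<le> (s + \<alpha> * (\<delta> k * r k))\<^sup>2" using ds r0 by (intro power_mono) auto
    also have "\<dots> = s\<^sup>2 + 2 * \<delta> k * (s * (\<alpha> * r k)) + (\<delta> k)\<^sup>2 * (\<alpha> * r k)\<^sup>2"
      by (simp add: power2_eq_square algebra_simps)
    finally have "(d (Suc k))\<^sup>2 \<le> s\<^sup>2 + 2 * \<delta> k * (s * (\<alpha> * r k)) + (\<delta> k)\<^sup>2 * (\<alpha> * r k)\<^sup>2" .
    moreover have "(1 + \<delta> k)\<^sup>2 * (d k)\<^sup>2 = (d k)\<^sup>2 + 2 * \<delta> k * (d k * d k) + (\<delta> k)\<^sup>2 * (d k)\<^sup>2"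
      by (simp add: power2_eq_square algebra_simps)
    moreover have "\<alpha>\<^sup>2 * (r k)\<^sup>2 = (\<alpha> * r k)\<^sup>2" by (simp add: power_mult_distrib)
    ultimately show ?thesis using s2 m1' m2' by linarith
  qed
  define Pr where "Pr k = (\<Prod>j<k. (1 + \<delta> j))" for k
  have Pr1: "Pr k \<ge> 1" for k unfolding Pr_def using \<delta>0 by (intro prod_ge_1) auto
  have Prexp: "Pr k \<le> exp (\<Sum>j<k. \<delta> j)" for k
  proof -
    have h: "0 \<le> 1 + \<delta> j \<and> 1 + \<delta> j \<le> exp (\<delta> j)" for j
      using \<delta>0[of j] exp_ge_add_one_self[of "\<delta> j"] by linarith
    have "Pr k \<le> (\<Prod>j<k. exp (\<delta> j))" unfolding Pr_def
      by (rule prod_mono) (rule h)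
    also have "\<dots> = exp (\<Sum>j<k. \<delta> j)" by (simp add: exp_sum)
    finally show ?thesis .
  qed
  have Pr2: "(Pr k)\<^sup>2 \<le> 11" for k
  proof -
    have "(\<Sum>j<k. \<delta> j) \<le> 1" unfolding \<delta>_def by (rule delta_sum)
    then have "Pr k \<le> 272/100" using Prexp[of k] e_less_272 by (smt (verit) exp_mono)
    then have "(Pr k)\<^sup>2 \<le> (272/100)\<^sup>2" using Pr1[of k] by (intro power_mono) auto
    then show ?thesis by (simp add: power2_eq_square)
  qed
  have pot: "(d K)\<^sup>2 / (Pr K)\<^sup>2 + \<alpha>\<^sup>2 * (\<Sum>k<K. (r k)\<^sup>2 / (Pr (Suc k))\<^sup>2) \<le> (d 0)\<^sup>2" for K
  proof (induction K)
    case 0 then show ?case by (simp add: Pr_def)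
  next
    case (Suc K)
    have PS: "Pr (Suc K) = Pr K * (1 + \<delta> K)" unfolding Pr_def by simp
    have pp: "Pr K > 0" "1 + \<delta> K > 0" using Pr1[of K] \<delta>0[of K] by auto
    have "(d (Suc K))\<^sup>2 / (Pr (Suc K))\<^sup>2 \<le> ((1 + \<delta> K)\<^sup>2 * (d K)\<^sup>2 - \<alpha>\<^sup>2 * (r K)\<^sup>2) / (Pr (Suc K))\<^sup>2"
      using dstep[of K] by (intro divide_right_mono) auto
    also have "\<dots> = (d K)\<^sup>2 / (Pr K)\<^sup>2 - \<alpha>\<^sup>2 * ((r K)\<^sup>2 / (Pr (Suc K))\<^sup>2)"
    proof -
      have "(Pr (Suc K))\<^sup>2 = (Pr K)\<^sup>2 * (1 + \<delta> K)\<^sup>2" unfolding PS by (simp add: power_mult_distrib)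
      moreover have "(1 + \<delta> K)\<^sup>2 * (d K)\<^sup>2 / ((Pr K)\<^sup>2 * (1 + \<delta> K)\<^sup>2) = (d K)\<^sup>2 / (Pr K)\<^sup>2"
        using pp by simp
      ultimately show ?thesis by (simp add: diff_divide_distrib)
    qed
    finally show ?case using Suc.IH by (simp add: algebra_simps)
  qed
  define Bv where "Bv = max 1 \<lceil>11 * (norm (x0 - xs))\<^sup>2 / ((\<eta> - \<rho>)\<^sup>2 * \<epsilon>\<^sup>2)\<rceil>"
  define K where "K = nat Bv"
  have KB: "real K = real_of_int Bv" unfolding K_def Bv_def by simp
  have K1: "1 \<le> K" unfolding K_def Bv_def by simp
  have Kge: "real K \<ge> 11 * (norm (x0 - xs))\<^sup>2 / ((\<eta> - \<rho>)\<^sup>2 * \<epsilon>\<^sup>2)"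
    unfolding KB Bv_def by (meson le_of_int_ceiling max.cobounded2 of_int_le_iff order_trans)
  have found: "\<exists>k<K. r k \<le> \<eta> * \<epsilon>"
  proof (rule ccontr)
    assume "\<not> ?thesis"
    then have big: "\<forall>k<K. r k > \<eta> * \<epsilon>" by auto
    have ee: "\<eta> * \<epsilon> > 0" using eta eps_pos by simp
    have "(\<Sum>k<K. (\<eta> * \<epsilon>)\<^sup>2 / 11) < (\<Sum>k<K. (r k)\<^sup>2 / (Pr (Suc k))\<^sup>2)"
    proof (rule sum_strict_mono)
      have "0 \<in> {..<K}" using K1 by simp
      then show "{..<K} \<noteq> {}" by blast
    next
      fix k assume "k \<in> {..<K}"
      then have rk: "r k > \<eta> * \<epsilon>" using big by auto
      have "(\<eta> * \<epsilon>)\<^sup>2 < (r k)\<^sup>2" using rk ee by (intro power_strict_mono) auto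
      then have "(\<eta> * \<epsilon>)\<^sup>2 / 11 < (r k)\<^sup>2 / 11" by simp
      also have "\<dots> \<le> (r k)\<^sup>2 / (Pr (Suc k))\<^sup>2"
        using Pr2[of "Suc k"] Pr1[of "Suc k"] by (intro divide_left_mono) auto
      finally show "(\<eta> * \<epsilon>)\<^sup>2 / 11 < (r k)\<^sup>2 / (Pr (Suc k))\<^sup>2" .
    qed simp
    then have "real K * (\<eta> * \<epsilon>)\<^sup>2 / 11 < (\<Sum>k<K. (r k)\<^sup>2 / (Pr (Suc k))\<^sup>2)" by simp
    then have "\<alpha>\<^sup>2 * (real K * (\<eta> * \<epsilon>)\<^sup>2 / 11) < \<alpha>\<^sup>2 * (\<Sum>k<K. (r k)\<^sup>2 / (Pr (Suc k))\<^sup>2)"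
      using a0 by simp
    also have "\<dots> \<le> (d 0)\<^sup>2" using pot[of K] by (smt (verit) divide_nonneg_nonneg zero_le_power2)
    finally have "real K * ((\<alpha> * \<eta>)\<^sup>2 * \<epsilon>\<^sup>2) < 11 * (norm (x0 - xs))\<^sup>2"
      unfolding d_def x_init by (simp add: power_mult_distrib algebra_simps)
    then have lt: "real K * ((\<eta> - \<rho>)\<^sup>2 * \<epsilon>\<^sup>2) < 11 * (norm (x0 - xs))\<^sup>2" unfolding aeta .
    have pos: "(\<eta> - \<rho>)\<^sup>2 * \<epsilon>\<^sup>2 > 0" using rho_eta eps_pos by simp
    have "11 * (norm (x0 - xs))\<^sup>2 \<le> real K * ((\<eta> - \<rho>)\<^sup>2 * \<epsilon>\<^sup>2)"
      using Kge pos by (simp add: divide_le_eq)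
    then show False using lt by simp
  qed
  then obtain k where k: "k < K" "r k \<le> \<eta> * \<epsilon>" by blast
  have part3: "resolvent (op_scale \<eta> (op_plus F G)) (x k) \<noteq> {}
      \<and> (\<forall>j \<in> resolvent (op_scale \<eta> (op_plus F G)) (x k). norm (x k - j) / \<eta> \<le> \<epsilon>)"
  proof (intro conjI ballI)
    show "resolvent (op_scale \<eta> (op_plus F G)) (x k) \<noteq> {}" using P[of k] by blast
  next
    fix j assume "j \<in> resolvent (op_scale \<eta> (op_plus F G)) (x k)"
    then have "j = P k" using T_unique[OF Flip mono eta eta_L _ P[of k]] by blast
    then show "norm (x k - j) / \<eta> \<le> \<epsilon>" using k(2) eta unfolding r_def by (simp add: divide_le_eq mult.commute)
  qed
  define lm where "lm = ln (8 * real_of_int Bv * (ln (real_of_int Bv + 1))\<^sup>2)"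
  have each: "real (inner_iters \<eta> L j) \<le> 1 + c * lm" if j: "j < K" for j
  proof -
    have "c * l j \<ge> 0" using c0 l0[of j] by simp
    then have "real (inner_iters \<eta> L j) \<le> c * l j + 1"
      unfolding inner_iters_def c_def l_def by linarith
    moreover have "l j \<le> lm"
    proof -
      have j1: "real (j + 1) \<le> real_of_int Bv" using j KB by linarith
      have "ln (real (j + 2)) \<le> ln (real_of_int Bv + 1)" using j1 by simp
      moreover have "ln (real (j + 2)) \<ge> 0" by simp
      ultimately have "(ln (real (j + 2)))\<^sup>2 \<le> (ln (real_of_int Bv + 1))\<^sup>2" by (intro power_mono)
      then have jj: "real (j + 1) * (ln (real (j + 2)))\<^sup>2 \<le> real_of_int Bv * (ln (real_of_int Bv + 1))\<^sup>2"
        using j1 by (intro mult_mono) auto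
      have "8 * real (j + 1) * (ln (real (j + 2)))\<^sup>2 \<le> 8 * real_of_int Bv * (ln (real_of_int Bv + 1))\<^sup>2"
        using mult_left_mono[OF jj, of 8] by (simp only: mult.assoc)
      then show ?thesis unfolding l_def lm_def using argpos[of j] by (subst ln_le_cancel_iff) auto
    qed
    ultimately show ?thesis using c0 by (smt (verit) mult_left_mono)
  qed
  have compl: "real (\<Sum>k<K. inner_iters \<eta> L k) \<le> real_of_int Bv * (1 + c * lm)"
  proof -
    have "real (\<Sum>k<K. inner_iters \<eta> L k) = (\<Sum>k<K. real (inner_iters \<eta> L k))" by simp
    also have "\<dots> \<le> (\<Sum>k<K. 1 + c * lm)" using each by (intro sum_mono) auto
    also have "\<dots> = real K * (1 + c * lm)" by simp
    finally show ?thesis unfolding KB .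
  qed
  show ?thesis
    apply (rule exI[of _ K])
    using K1 KB part3 k(1) compl unfolding Bv_def lm_def c_def Let_def
    by (auto simp: mult.assoc)
qed

end
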